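(* Let $\mathcal{X}\subset\mathbb{R}^d$ and let $X=(X_n)_{n\ge0}$ be the Markov chain on $\mathcal{X}$ given by $X_{n+1}=f_{n+1}(X_n)$, $n=0,1,2,\dots$, where $f_1,f_2,\dots$ are iid copies of a random mapping $f:\mathcal{X}\to\mathcal{X}$ which is almost surely locally Lipschitz. Fix a function $U:\mathcal{X}\to\mathbb{R}_+$ with $\inf_{\mathcal{X}} U>0$, and suppose that the inequality $KW\le W-U$ (pointwise on $\mathcal{X}$) has a non-negative finite solution $W_*$. Define $$V_*(x)=\mathbb{E}_x\Big[\sum_{k=0}^\infty U(X_k)\prod_{l=1}^{k}Df_l(X_{l-1})\Big],\qquad x\in\mathcal{X}.$$ Then $V_*$ is finite and satisfies $KV_*=V_*-U$ on $\mathcal{X}$. Furthermore, the equation $KV=V-U$ has at most one bounded solution.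
   Context: $\|\cdot\|$ is the Euclidean norm and $B_\delta(x)=\{x':\|x'-x\|<\delta\}$. For a locally Lipschitz map $g$, its local Lipschitz constant at $x$ is $Dg(x)=\lim_{\delta\to0}\sup_{x',x''\in B_\delta(x)}\frac{\|g(x')-g(x'')\|}{\|x'-x''\|}$. For a function $V:\mathcal{X}\to\mathbb{R}_+$, the operator $K$ is defined by $KV(x)=\mathbb{E}\,[Df(x)\,V(f(x))]$. $\mathbb{E}_x$ denotes expectation conditional on $X_0=x$, and the empty product (for $k=0$) equals $1$. Functions $V$ considered as solutions of $KV=V-U$ are non-negative functions on $\mathcal{X}$. *)

theory Defs
  imports "HOL-Probability.Probability"
begin

text \<open>Values in ennreal; the supremum of the (non-negative) ratios is taken with 0 added,
  so that an empty index set gives 0.\<close>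
definition lipc :: "('a::real_normed_vector \<Rightarrow> 'b::real_normed_vector) \<Rightarrow> 'a set \<Rightarrow> 'a \<Rightarrow> ennreal" where
  "lipc g S x = Lim (at_right (0::real))
     (\<lambda>\<delta>. Sup (insert 0 {ennreal (norm (g x' - g x'') / norm (x' - x'')) | x' x''.
                 x' \<in> ball x \<delta> \<inter> S \<and> x'' \<in> ball x \<delta> \<inter> S \<and> x' \<noteq> x''}))"

definition loc_lipschitz_on :: "'a::real_normed_vector set \<Rightarrow> ('a \<Rightarrow> 'b::real_normed_vector) \<Rightarrow> bool" where
  "loc_lipschitz_on S g \<longleftrightarrow> (\<forall>x\<in>S. \<exists>\<delta>>0. \<exists>L. \<forall>x'\<in>ball x \<delta> \<inter> S. \<forall>x''\<in>ball x \<delta> \<inter> S.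
      norm (g x' - g x'') \<le> L * norm (x' - x''))"

definition Kop :: "'w measure \<Rightarrow> ('w \<Rightarrow> 'a::real_normed_vector \<Rightarrow> 'a) \<Rightarrow> 'a set
     \<Rightarrow> ('a \<Rightarrow> ennreal) \<Rightarrow> 'a \<Rightarrow> ennreal" where
  "Kop \<mu> f S V x = (\<integral>\<^sup>+ w. lipc (f w) S x * V (f w x) \<partial>\<mu>)"

primrec chain :: "('w \<Rightarrow> 'a \<Rightarrow> 'a) \<Rightarrow> (nat \<Rightarrow> 'w) \<Rightarrow> 'a \<Rightarrow> nat \<Rightarrow> 'a" where
  "chain f \<omega> x 0 = x"
| "chain f \<omega> x (Suc n) = f (\<omega> n) (chain f \<omega> x n)"

text \<open>V_*(x) = E_x [ sum_k U(X_k) prod_{l=1}^k Df_l(X_{l-1}) ], with f_l = f (omega (l-1)),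
  omega distributed according to the infinite product of mu (iid copies).\<close>
definition Vstar :: "'w measure \<Rightarrow> ('w \<Rightarrow> 'a::real_normed_vector \<Rightarrow> 'a) \<Rightarrow> 'a set
     \<Rightarrow> ('a \<Rightarrow> real) \<Rightarrow> 'a \<Rightarrow> ennreal" where
  "Vstar \<mu> f S U x = (\<integral>\<^sup>+ \<omega>. (\<Sum>k. ennreal (U (chain f \<omega> x k)) *
        (\<Prod>l\<in>{1..k}. lipc (f (\<omega> (l - 1))) S (chain f \<omega> x (l - 1))))
     \<partial>(PiM (UNIV :: nat set) (\<lambda>_. \<mu>)))"

end

theory Submission
  imports Defs
begin

lemma decomp:
  assumes "prob_space M" and g: "g \<in> borel_measurable (PiM (UNIV::nat set) (\<lambda>_. M))"
  shows "(\<integral>\<^sup>+\<omega>. g \<omega> \<partial>PiM UNIV (\<lambda>_. M)) = (\<integral>\<^sup>+s. (\<integral>\<^sup>+\<omega>. g (case_nat s \<omega>) \<partial>PiM UNIV (\<lambda>_. M)) \<partial>M)"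
    and "(\<lambda>s. \<integral>\<^sup>+\<omega>. g (case_nat s \<omega>) \<partial>PiM UNIV (\<lambda>_. M)) \<in> borel_measurable M"
proof -
  interpret S: sequence_space M using assms(1) by (simp add: sequence_space_def product_prob_space_def product_sigma_finite_def prob_space_imp_sigma_finite product_prob_space_axioms_def)
  interpret P: pair_sigma_finite M S.S ..
  have m: "(\<lambda>(s, \<omega>). g (case_nat s \<omega>)) \<in> borel_measurable (M \<Otimes>\<^sub>M S.S)"
    using g by measurable
  have "(\<integral>\<^sup>+\<omega>. g \<omega> \<partial>S.S) = (\<integral>\<^sup>+X. g ((\<lambda>(s, \<omega>). case_nat s \<omega>) X) \<partial>(M \<Otimes>\<^sub>M S.S))"
    by (subst S.PiM_iter[symmetric]) (simp add: nn_integral_distr g)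
  also have "\<dots> = (\<integral>\<^sup>+x. \<integral>\<^sup>+X. g ((\<lambda>(s, \<omega>). case_nat s \<omega>) (x, X)) \<partial>S.S \<partial>M)"
    using m by (subst S.nn_integral_fst) (simp_all add: case_prod_beta')
  finally show "(\<integral>\<^sup>+\<omega>. g \<omega> \<partial>PiM UNIV (\<lambda>_. M)) = (\<integral>\<^sup>+s. (\<integral>\<^sup>+\<omega>. g (case_nat s \<omega>) \<partial>PiM UNIV (\<lambda>_. M)) \<partial>M)" by simp
  show "(\<lambda>s. \<integral>\<^sup>+\<omega>. g (case_nat s \<omega>) \<partial>PiM UNIV (\<lambda>_. M)) \<in> borel_measurable M"
    using S.borel_measurable_nn_integral_fst[OF m] by simp
qed

locale sett =
  fixes \<mu> :: "'w measure" and f :: "'w \<Rightarrow> 'a::euclidean_space \<Rightarrow> 'a"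
    and X :: "'a set" and U :: "'a \<Rightarrow> real"
  assumes prob: "prob_space \<mu>"
    and maps_into: "\<And>w x. x \<in> X \<Longrightarrow> f w x \<in> X"
    and f_meas: "(\<lambda>(w, x). f w x) \<in> measurable (\<mu> \<Otimes>\<^sub>M restrict_space borel X) (restrict_space borel X)"
    and Df_meas: "(\<lambda>(w, x). lipc (f w) X x) \<in> borel_measurable (\<mu> \<Otimes>\<^sub>M restrict_space borel X)"
    and U_meas: "U \<in> borel_measurable (restrict_space borel X)"
begin

abbreviation "S \<equiv> PiM (UNIV::nat set) (\<lambda>_. \<mu>)"
abbreviation "MX \<equiv> restrict_space borel X"

definition "Pr \<omega> x k = (\<Prod>j<k. lipc (f (\<omega> j)) X (chain f \<omega> x j))"
definition "a \<omega> x k = ennreal (U (chain f \<omega> x k)) * Pr \<omega> x k"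
definition "Phi x \<omega> = (\<Sum>k. a \<omega> x k)"

lemma probS: "prob_space S"
  by (rule prob_space_PiM) (simp add: prob)

lemma chain_in: "x \<in> X \<Longrightarrow> chain f \<omega> x k \<in> X"
  by (induction k) (auto simp: maps_into)

lemma chain_meas[measurable]: "x \<in> X \<Longrightarrow> (\<lambda>\<omega>. chain f \<omega> x k) \<in> measurable S MX"
proof (induction k)
  case 0 then show ?case by (simp add: space_restrict_space)
next
  case (Suc k)
  have "(\<lambda>\<omega>. (\<lambda>(w, y). f w y) (\<omega> k, chain f \<omega> x k)) \<in> measurable S MX"
    by (rule measurable_compose[OF _ f_meas], rule measurable_Pair)
       (auto intro: measurable_component_singleton Suc)
  then show ?case by simp
qed

lemma L_meas[measurable]: "x \<in> X \<Longrightarrow> (\<lambda>\<omega>. lipc (f (\<omega> k)) X (chain f \<omega> x k)) \<in> borel_measurable S"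
proof -
  assume x: "x \<in> X"
  have "(\<lambda>\<omega>. (\<lambda>(w, y). lipc (f w) X y) (\<omega> k, chain f \<omega> x k)) \<in> borel_measurable S"
    by (rule measurable_compose[OF _ Df_meas], rule measurable_Pair)
       (auto intro: measurable_component_singleton chain_meas x)
  then show ?thesis by simp
qed

lemma Uc_meas[measurable]: "x \<in> X \<Longrightarrow> (\<lambda>\<omega>. U (chain f \<omega> x k)) \<in> borel_measurable S"
  by (rule measurable_compose[OF chain_meas U_meas])

lemma Pr_meas[measurable]: "x \<in> X \<Longrightarrow> (\<lambda>\<omega>. Pr \<omega> x k) \<in> borel_measurable S"
  unfolding Pr_def by measurable

lemma a_meas[measurable]: "x \<in> X \<Longrightarrow> (\<lambda>\<omega>. a \<omega> x k) \<in> borel_measurable S"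
  unfolding a_def by measurable

lemma Phi_meas[measurable]: "x \<in> X \<Longrightarrow> Phi x \<in> borel_measurable S"
  unfolding Phi_def by measurable

lemma fx_meas: "x \<in> X \<Longrightarrow> (\<lambda>w. f w x) \<in> measurable \<mu> MX"
  using measurable_compose[OF measurable_Pair2'[of x MX \<mu>] f_meas]
  by (simp add: space_restrict_space)

lemma Lx_meas: "x \<in> X \<Longrightarrow> (\<lambda>w. lipc (f w) X x) \<in> borel_measurable \<mu>"
  using measurable_compose[OF measurable_Pair2'[of x MX \<mu>] Df_meas]
  by (simp add: space_restrict_space)

lemma K_integrand_meas:
  assumes "x \<in> X" "V \<in> borel_measurable MX"
  shows "(\<lambda>w. lipc (f w) X x * V (f w x)) \<in> borel_measurable \<mu>"
  using Lx_meas[OF assms(1)] measurable_compose[OF fx_meas[OF assms(1)] assms(2)]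
  by measurable

lemma chain_shift: "chain f (case_nat w \<omega>) x (Suc k) = chain f \<omega> (f w x) k"
  by (induction k) auto

lemma Pr_shift: "Pr (case_nat w \<omega>) x (Suc k) = lipc (f w) X x * Pr \<omega> (f w x) k"
  unfolding Pr_def
  by (subst prod.lessThan_Suc_shift) (simp add: chain_shift del: chain.simps(2))

lemma a_shift: "a (case_nat w \<omega>) x (Suc k) = lipc (f w) X x * a \<omega> (f w x) k"
  unfolding a_def by (simp only: Pr_shift chain_shift mult_ac)

lemma a_0: "a \<omega> x 0 = ennreal (U x)"
  by (simp add: a_def Pr_def)

lemma Phi_shift: "Phi x (case_nat w \<omega>) = ennreal (U x) + lipc (f w) X x * Phi (f w x) \<omega>"
proof -
  have "Phi x (case_nat w \<omega>) = (\<Sum>j. a (case_nat w \<omega>) x (j + 1)) + (\<Sum>j<1. a (case_nat w \<omega>) x j)"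
    unfolding Phi_def by (rule suminf_offset) simp
  then show ?thesis by (simp add: a_shift a_0 Phi_def add.commute)
qed

lemma Vstar_Phi: "Vstar \<mu> f X U x = (\<integral>\<^sup>+\<omega>. Phi x \<omega> \<partial>S)"
proof -
  have "(\<Prod>l\<in>{1..k}. lipc (f (\<omega> (l - 1))) X (chain f \<omega> x (l - 1))) = Pr \<omega> x k" for \<omega> k
    unfolding Pr_def by (induction k) (auto simp: prod.cl_ivl_Suc lessThan_Suc mult.commute)
  then show ?thesis unfolding Vstar_def Phi_def a_def by simp
qed


lemma int_shift:
  assumes x: "x \<in> X" and g1: "g1 \<in> borel_measurable S" and g: "\<And>y. y \<in> X \<Longrightarrow> g y \<in> borel_measurable S"
    and gs: "\<And>w \<omega>. g1 (case_nat w \<omega>) = ennreal (U x) + lipc (f w) X x * g (f w x) \<omega>"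
  shows "(\<integral>\<^sup>+\<omega>. g1 \<omega> \<partial>S) = ennreal (U x) + (\<integral>\<^sup>+w. lipc (f w) X x * (\<integral>\<^sup>+\<omega>. g (f w x) \<omega> \<partial>S) \<partial>\<mu>)"
proof -
  interpret P: prob_space S by (rule probS)
  interpret M: prob_space \<mu> by (rule prob)
  define G where "G w = (\<integral>\<^sup>+\<omega>. g1 (case_nat w \<omega>) \<partial>S)" for w
  have Gm: "G \<in> borel_measurable \<mu>" unfolding G_def by (rule decomp(2)[OF prob g1])
  have G: "G w = ennreal (U x) + lipc (f w) X x * (\<integral>\<^sup>+\<omega>. g (f w x) \<omega> \<partial>S)" for w
    unfolding G_def gs
    using g[OF maps_into[OF x]]
    by (subst nn_integral_add) (auto simp: nn_integral_cmult P.emeasure_space_1)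
  define h where "h w = lipc (f w) X x * (\<integral>\<^sup>+\<omega>. g (f w x) \<omega> \<partial>S)" for w
  have "h w = G w - ennreal (U x)" for w unfolding G h_def by simp
  then have hm: "h \<in> borel_measurable \<mu>"
    using Gm by (subst measurable_cong[where g="\<lambda>w. G w - ennreal (U x)"]) auto
  have "(\<integral>\<^sup>+\<omega>. g1 \<omega> \<partial>S) = (\<integral>\<^sup>+w. G w \<partial>\<mu>)"
    unfolding G_def by (rule decomp(1)[OF prob g1])
  also have "\<dots> = (\<integral>\<^sup>+w. ennreal (U x) + h w \<partial>\<mu>)" unfolding G h_def ..
  also have "\<dots> = ennreal (U x) + (\<integral>\<^sup>+w. h w \<partial>\<mu>)"
    using hm by (subst nn_integral_add) (auto simp: M.emeasure_space_1)
  finally show ?thesis unfolding h_def .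
qed

lemma Vstar_rec: "x \<in> X \<Longrightarrow> Vstar \<mu> f X U x = ennreal (U x) + Kop \<mu> f X (Vstar \<mu> f X U) x"
  unfolding Kop_def Vstar_Phi
  by (rule int_shift) (auto simp: Phi_shift Phi_meas)


definition "Psi W n x \<omega> = (\<Sum>k<n. a \<omega> x k) + Pr \<omega> x n * ennreal (W (chain f \<omega> x n))"

lemma Psi_shift: "Psi W (Suc n) x (case_nat w \<omega>) = ennreal (U x) + lipc (f w) X x * Psi W n (f w x) \<omega>"
  unfolding Psi_def
  by (simp only: sum.lessThan_Suc_shift a_shift a_0 Pr_shift chain_shift sum_distrib_left[symmetric]
        distrib_left mult.assoc add.assoc)

lemma Vstar_le:
  assumes W_meas: "W \<in> borel_measurable MX"
    and W_sol: "\<And>x. x \<in> X \<Longrightarrow> Kop \<mu> f X (\<lambda>y. ennreal (W y)) x + ennreal (U x) \<le> ennreal (W x)"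
    and x: "x \<in> X"
  shows "Vstar \<mu> f X U x \<le> ennreal (W x)"
proof -
  interpret P: prob_space S by (rule probS)
  have Wc[measurable]: "y \<in> X \<Longrightarrow> (\<lambda>\<omega>. W (chain f \<omega> y n)) \<in> borel_measurable S" for y n
    by (rule measurable_compose[OF chain_meas W_meas])
  have Psim: "y \<in> X \<Longrightarrow> Psi W n y \<in> borel_measurable S" for y n
    unfolding Psi_def by measurable
  have bound: "\<forall>y\<in>X. (\<integral>\<^sup>+\<omega>. Psi W n y \<omega> \<partial>S) \<le> ennreal (W y)" for n
  proof (induction n)
    case 0
    then show ?case by (simp add: Psi_def Pr_def P.emeasure_space_1)
  next
    case (Suc n)
    show ?case
    proof
      fix y assume y: "y \<in> X"
      have "(\<integral>\<^sup>+\<omega>. Psi W (Suc n) y \<omega> \<partial>S) = ennreal (U y) + (\<integral>\<^sup>+w. lipc (f w) X y * (\<integral>\<^sup>+\<omega>. Psi W n (f w y) \<omega> \<partial>S) \<partial>\<mu>)"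
        by (rule int_shift[OF y]) (auto simp: Psim Psi_shift y)
      also have "\<dots> \<le> ennreal (U y) + (\<integral>\<^sup>+w. lipc (f w) X y * ennreal (W (f w y)) \<partial>\<mu>)"
        using Suc maps_into[OF y]
        by (intro add_left_mono nn_integral_mono mult_left_mono) auto
      also have "\<dots> \<le> ennreal (W y)" using W_sol[OF y] by (simp add: Kop_def add.commute)
      finally show "(\<integral>\<^sup>+\<omega>. Psi W (Suc n) y \<omega> \<partial>S) \<le> ennreal (W y)" .
    qed
  qed
  have "Vstar \<mu> f X U x = (\<Sum>k. (\<integral>\<^sup>+\<omega>. a \<omega> x k \<partial>S))"
    unfolding Vstar_Phi Phi_def using x by (subst nn_integral_suminf) auto
  also have "\<dots> = (SUP n. \<Sum>k<n. (\<integral>\<^sup>+\<omega>. a \<omega> x k \<partial>S))" by (rule suminf_eq_SUP)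
  also have "\<dots> \<le> ennreal (W x)"
  proof (rule SUP_least)
    fix n
    have "(\<Sum>k<n. (\<integral>\<^sup>+\<omega>. a \<omega> x k \<partial>S)) = (\<integral>\<^sup>+\<omega>. (\<Sum>k<n. a \<omega> x k) \<partial>S)"
      using x by (subst nn_integral_sum) auto
    also have "\<dots> \<le> (\<integral>\<^sup>+\<omega>. Psi W n x \<omega> \<partial>S)"
      unfolding Psi_def by (intro nn_integral_mono) simp
    also have "\<dots> \<le> ennreal (W x)" using bound x by blast
    finally show "(\<Sum>k<n. (\<integral>\<^sup>+\<omega>. a \<omega> x k \<partial>S)) \<le> ennreal (W x)" .
  qed
  finally show ?thesis .
qed


lemma K_mono: "x \<in> X \<Longrightarrow> (\<And>y. y \<in> X \<Longrightarrow> V y \<le> V' y) \<Longrightarrow> Kop \<mu> f X V x \<le> Kop \<mu> f X V' x"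
  unfolding Kop_def by (intro nn_integral_mono mult_left_mono) (auto simp: maps_into)

lemma K_add: "x \<in> X \<Longrightarrow> V \<in> borel_measurable MX \<Longrightarrow> V' \<in> borel_measurable MX \<Longrightarrow>
   Kop \<mu> f X (\<lambda>y. V y + V' y) x = Kop \<mu> f X V x + Kop \<mu> f X V' x"
  unfolding Kop_def distrib_left by (rule nn_integral_add) (auto intro: K_integrand_meas)

lemma K_cmult: "x \<in> X \<Longrightarrow> V \<in> borel_measurable MX \<Longrightarrow>
   Kop \<mu> f X (\<lambda>y. c * V y) x = c * Kop \<mu> f X V x"
  unfolding Kop_def mult.left_commute[of _ c] by (rule nn_integral_cmult) (auto intro: K_integrand_meas)

lemma half:
  assumes V1m: "V1 \<in> borel_measurable MX" and V2m: "V2 \<in> borel_measurable MX"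
    and nn: "\<forall>x\<in>X. V1 x \<ge> 0 \<and> V2 x \<ge> 0"
    and e1: "\<forall>x\<in>X. Kop \<mu> f X (\<lambda>y. ennreal (V1 y)) x + ennreal (U x) = ennreal (V1 x)"
    and e2: "\<forall>x\<in>X. Kop \<mu> f X (\<lambda>y. ennreal (V2 y)) x + ennreal (U x) = ennreal (V2 x)"
    and x: "x \<in> X"
  shows "ennreal (V1 x) \<le> ennreal (V2 x) + Kop \<mu> f X (\<lambda>y. ennreal \<bar>V1 y - V2 y\<bar>) x"
proof -
  have m1: "(\<lambda>y. ennreal (V2 y)) \<in> borel_measurable MX" using V2m by measurable
  have m2: "(\<lambda>y. ennreal \<bar>V1 y - V2 y\<bar>) \<in> borel_measurable MX" using V1m V2m by measurable
  let ?D = "(\<lambda>y. ennreal \<bar>V1 y - V2 y\<bar>)"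
  have A: "Kop \<mu> f X (\<lambda>y. ennreal (V1 y)) x \<le> Kop \<mu> f X (\<lambda>y. ennreal (V2 y) + ennreal \<bar>V1 y - V2 y\<bar>) x"
  proof (rule K_mono[OF x])
    fix y assume y: "y \<in> X"
    have "V1 y \<le> V2 y + \<bar>V1 y - V2 y\<bar>" by simp
    then show "ennreal (V1 y) \<le> ennreal (V2 y) + ennreal \<bar>V1 y - V2 y\<bar>"
      using nn y ennreal_leI[of "V1 y" "V2 y + \<bar>V1 y - V2 y\<bar>"] by simp
  qed
  have B: "Kop \<mu> f X (\<lambda>y. ennreal (V2 y) + ennreal \<bar>V1 y - V2 y\<bar>) x = Kop \<mu> f X (\<lambda>y. ennreal (V2 y)) x + Kop \<mu> f X ?D x"
    by (rule K_add[OF x m1 m2])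
  have "ennreal (V1 x) = Kop \<mu> f X (\<lambda>y. ennreal (V1 y)) x + ennreal (U x)" using e1 x by simp
  also have "\<dots> \<le> Kop \<mu> f X (\<lambda>y. ennreal (V2 y)) x + Kop \<mu> f X ?D x + ennreal (U x)"
    using A B by (metis add_right_mono)
  also have "\<dots> = (Kop \<mu> f X (\<lambda>y. ennreal (V2 y)) x + ennreal (U x)) + Kop \<mu> f X ?D x"
    by (simp add: ac_simps)
  also have "Kop \<mu> f X (\<lambda>y. ennreal (V2 y)) x + ennreal (U x) = ennreal (V2 x)" using e2 x by simp
  finally show ?thesis .
qed


lemma uniq:
  assumes W_meas: "W \<in> borel_measurable MX"
    and W_sol: "\<And>x. x \<in> X \<Longrightarrow> Kop \<mu> f X (\<lambda>y. ennreal (W y)) x + ennreal (U x) \<le> ennreal (W x)"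
    and cpos: "c > 0" and Uc: "\<And>x. x \<in> X \<Longrightarrow> c \<le> U x"
    and V1m: "V1 \<in> borel_measurable MX" and V2m: "V2 \<in> borel_measurable MX"
    and nn: "\<forall>x\<in>X. V1 x \<ge> 0 \<and> V2 x \<ge> 0"
    and b1: "\<forall>x\<in>X. V1 x \<le> B1" and b2: "\<forall>x\<in>X. V2 x \<le> B2"
    and e1: "\<forall>x\<in>X. Kop \<mu> f X (\<lambda>y. ennreal (V1 y)) x + ennreal (U x) = ennreal (V1 x)"
    and e2: "\<forall>x\<in>X. Kop \<mu> f X (\<lambda>y. ennreal (V2 y)) x + ennreal (U x) = ennreal (V2 x)"
  shows "\<forall>x\<in>X. V1 x = V2 x"
proof -
  define D where "D y = \<bar>V1 y - V2 y\<bar>" for y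
  define B where "B = max 1 (max B1 B2)"
  have Bpos: "B > 0" unfolding B_def by simp
  have DB: "D x \<le> B" if "x \<in> X" for x
    using nn b1 b2 that unfolding D_def B_def by fastforce
  have D0: "D x \<ge> 0" for x unfolding D_def by simp
  have Dm: "(\<lambda>y. ennreal (D y)) \<in> borel_measurable MX" unfolding D_def using V1m V2m by measurable
  have Wm: "(\<lambda>y. ennreal (W y)) \<in> borel_measurable MX" using W_meas by measurable
  have DK: "ennreal (D x) \<le> Kop \<mu> f X (\<lambda>y. ennreal (D y)) x" if x: "x \<in> X" for x
  proof (cases "V2 x \<le> V1 x")
    case True
    have "ennreal (V2 x) + ennreal (D x) = ennreal (V1 x)"
      using True nn x unfolding D_def by (subst ennreal_plus[symmetric]) auto
    then have "ennreal (V2 x) + ennreal (D x) \<le> ennreal (V2 x) + Kop \<mu> f X (\<lambda>y. ennreal (D y)) x"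
      using half[OF V1m V2m nn e1 e2 x] unfolding D_def by simp
    then show ?thesis by (simp add: ennreal_add_left_cancel_le)
  next
    case False
    have "ennreal (V1 x) + ennreal (D x) = ennreal (V2 x)"
      using False nn x unfolding D_def by (subst ennreal_plus[symmetric]) auto
    moreover have "(\<lambda>y. ennreal \<bar>V2 y - V1 y\<bar>) = (\<lambda>y. ennreal (D y))"
      unfolding D_def by (simp add: abs_minus_commute)
    ultimately have "ennreal (V1 x) + ennreal (D x) \<le> ennreal (V1 x) + Kop \<mu> f X (\<lambda>y. ennreal (D y)) x"
      using half[OF V2m V1m _ e2 e1 x] nn by auto
    then show ?thesis by (simp add: ennreal_add_left_cancel_le)
  qed
  have WU: "U x \<le> W x" if "x \<in> X" for x
  proof -
    have "ennreal (U x) \<le> ennreal (W x)" using W_sol[OF that] by (metis add.commute le_iff_add order_trans)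
    then show ?thesis using Uc[OF that] cpos by (simp add: ennreal_le_iff2)
  qed
  have Wpos: "W x > 0" if "x \<in> X" for x using WU[OF that] Uc[OF that] cpos by linarith
  have contr: "D x \<le> s * (W x - U x)" if x: "x \<in> X" and s0: "s \<ge> 0" and sD: "\<forall>y\<in>X. D y \<le> s * W y" for x s
  proof -
    have KWfin: "Kop \<mu> f X (\<lambda>y. ennreal (W y)) x \<le> ennreal (W x)"
      using W_sol[OF x] by (metis add.commute le_iff_add order_trans)
    then obtain k where k: "Kop \<mu> f X (\<lambda>y. ennreal (W y)) x = ennreal k" "k \<ge> 0"
      by (metis ennreal_cases ennreal_le_iff2 top_unique ennreal_neq_top)
    have "ennreal k + ennreal (U x) \<le> ennreal (W x)" using W_sol[OF x] k by simp
    then have "ennreal (k + U x) \<le> ennreal (W x)" using k Uc[OF x] cpos by simp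
    then have kU: "k + U x \<le> W x" using Wpos[OF x] by (simp add: ennreal_le_iff)
    have "ennreal (D x) \<le> Kop \<mu> f X (\<lambda>y. ennreal (D y)) x" by (rule DK[OF x])
    also have "\<dots> \<le> Kop \<mu> f X (\<lambda>y. ennreal s * ennreal (W y)) x"
    proof (rule K_mono[OF x])
      fix y assume y: "y \<in> X"
      have "ennreal (D y) \<le> ennreal (s * W y)" using sD y by (intro ennreal_leI) auto
      then show "ennreal (D y) \<le> ennreal s * ennreal (W y)" using s0 Wpos[OF y] by (simp add: ennreal_mult)
    qed
    also have "\<dots> = ennreal s * ennreal k" using K_cmult[OF x Wm] k by simp
    also have "\<dots> = ennreal (s * k)" using s0 k by (simp add: ennreal_mult)
    finally have "D x \<le> s * k" using s0 k by (simp add: ennreal_le_iff)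
    also have "\<dots> \<le> s * (W x - U x)" using kU s0 by (intro mult_left_mono) auto
    finally show ?thesis .
  qed
  define SS where "SS = {s. 0 \<le> s \<and> (\<forall>y\<in>X. D y \<le> s * W y)}"
  have Bc: "B / c \<in> SS"
  proof -
    have "D y \<le> B / c * W y" if y: "y \<in> X" for y
    proof -
      have "D y \<le> B" by (rule DB[OF y])
      also have "B = B / c * c" using cpos by simp
      also have "\<dots> \<le> B / c * W y" using WU[OF y] Uc[OF y] cpos Bpos
        by (intro mult_left_mono) auto
      finally show ?thesis .
    qed
    then show ?thesis unfolding SS_def using Bpos cpos by auto
  qed
  define s where "s = Inf SS"
  have bdd: "bdd_below SS" unfolding SS_def by (rule bdd_belowI[of _ 0]) auto
  have s0: "s \<ge> 0" unfolding s_def using Bc by (intro cInf_greatest) (auto simp: SS_def)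
  have sD: "\<forall>y\<in>X. D y \<le> s * W y"
  proof
    fix y assume y: "y \<in> X"
    have "D y / W y \<le> s" unfolding s_def
    proof (rule cInf_greatest)
      show "SS \<noteq> {}" using Bc by auto
      fix t assume "t \<in> SS"
      then have "D y \<le> t * W y" using y unfolding SS_def by auto
      then show "D y / W y \<le> t" using Wpos[OF y] by (simp add: divide_le_eq)
    qed
    then show "D y \<le> s * W y" using Wpos[OF y] by (simp add: divide_le_eq)
  qed
  have "s = 0"
  proof (rule ccontr)
    assume "s \<noteq> 0"
    then have spos: "s > 0" using s0 by simp
    define e where "e = min (s / 2) (s * s * c / (2 * B))"
    have epos: "e > 0" unfolding e_def using spos cpos Bpos by simp
    have es: "e \<le> s / 2" unfolding e_def by simp
    have e2: "e * (2 * B) \<le> s * s * c"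
    proof -
      have "e \<le> s * s * c / (2 * B)" unfolding e_def by (rule min.cobounded2)
      then show ?thesis using Bpos by (simp add: le_divide_eq)
    qed
    have "s - e \<in> SS" unfolding SS_def
    proof (intro CollectI conjI ballI)
      show "0 \<le> s - e" using es spos by simp
      fix y assume y: "y \<in> X"
      have c1: "D y \<le> s * (W y - U y)" by (rule contr[OF y s0 sD])
      have c2: "s * c \<le> s * U y" using Uc[OF y] spos by simp
      show "D y \<le> (s - e) * W y"
      proof (cases "e * W y \<le> s * c")
        case True
        then show ?thesis using c1 c2 by (simp add: algebra_simps)
      next
        case False
        have h2: "s * (s * c) < s * (e * W y)" using False spos by (intro mult_strict_left_mono) auto
        have "e * (2 * B) < e * (s * W y)" using e2 h2 by (simp add: algebra_simps)
        then have h3: "2 * B < s * W y" using epos by simp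
        have "(s / 2) * W y \<le> (s - e) * W y" using es Wpos[OF y] by (intro mult_right_mono) auto
        then have "B \<le> (s - e) * W y" using h3 by simp
        then show ?thesis using DB[OF y] by linarith
      qed
    qed
    then have "s \<le> s - e" unfolding s_def using bdd by (rule cInf_lower)
    then show False using epos by simp
  qed
  then show ?thesis using sD D0 unfolding D_def by (metis abs_le_zero_iff eq_iff_diff_eq_0 mult_zero_left)
qed

end

theorem theorem1:
  fixes \<mu> :: "'w measure" and f :: "'w \<Rightarrow> 'a::euclidean_space \<Rightarrow> 'a"
    and \<X> :: "'a set" and U W :: "'a \<Rightarrow> real"
  assumes prob: "prob_space \<mu>"
    and maps_into: "\<And>w x. x \<in> \<X> \<Longrightarrow> f w x \<in> \<X>"
    and f_meas: "(\<lambda>(w, x). f w x) \<in> measurable (\<mu> \<Otimes>\<^sub>M restrict_space borel \<X>) (restrict_space borel \<X>)"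
    and Df_meas: "(\<lambda>(w, x). lipc (f w) \<X> x) \<in> borel_measurable (\<mu> \<Otimes>\<^sub>M restrict_space borel \<X>)"
    and loclip: "AE w in \<mu>. loc_lipschitz_on \<X> (f w)"
    and U_meas: "U \<in> borel_measurable (restrict_space borel \<X>)"
    and U_nonneg: "\<And>x. x \<in> \<X> \<Longrightarrow> U x \<ge> 0"
    and U_inf: "(INF x\<in>\<X>. U x) > 0"
    and W_meas: "W \<in> borel_measurable (restrict_space borel \<X>)"
    and W_nonneg: "\<And>x. x \<in> \<X> \<Longrightarrow> W x \<ge> 0"
    and W_sol: "\<And>x. x \<in> \<X> \<Longrightarrow>
                  Kop \<mu> f \<X> (\<lambda>y. ennreal (W y)) x + ennreal (U x) \<le> ennreal (W x)"
  shows "(\<forall>x\<in>\<X>. Vstar \<mu> f \<X> U x < \<infinity> \<and>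
            Kop \<mu> f \<X> (Vstar \<mu> f \<X> U) x + ennreal (U x) = Vstar \<mu> f \<X> U x)
       \<and> (\<forall>V1 V2. V1 \<in> borel_measurable (restrict_space borel \<X>)
            \<and> V2 \<in> borel_measurable (restrict_space borel \<X>)
            \<and> (\<forall>x\<in>\<X>. V1 x \<ge> 0 \<and> V2 x \<ge> 0)
            \<and> (\<exists>B. \<forall>x\<in>\<X>. V1 x \<le> B) \<and> (\<exists>B. \<forall>x\<in>\<X>. V2 x \<le> B)
            \<and> (\<forall>x\<in>\<X>. Kop \<mu> f \<X> (\<lambda>y. ennreal (V1 y)) x + ennreal (U x) = ennreal (V1 x))
            \<and> (\<forall>x\<in>\<X>. Kop \<mu> f \<X> (\<lambda>y. ennreal (V2 y)) x + ennreal (U x) = ennreal (V2 x))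
          \<longrightarrow> (\<forall>x\<in>\<X>. V1 x = V2 x))"
proof -
  interpret sett \<mu> f \<X> U
    by (rule sett.intro[OF prob maps_into f_meas Df_meas U_meas])
  define c where "c = (INF x\<in>\<X>. U x)"
  have cpos: "c > 0" using U_inf unfolding c_def .
  have Uc: "c \<le> U x" if "x \<in> \<X>" for x
    unfolding c_def using that U_nonneg by (intro cINF_lower bdd_belowI2[of _ 0]) auto
  have part1: "\<forall>x\<in>\<X>. Vstar \<mu> f \<X> U x < \<infinity> \<and>
            Kop \<mu> f \<X> (Vstar \<mu> f \<X> U) x + ennreal (U x) = Vstar \<mu> f \<X> U x"
  proof
    fix x assume x: "x \<in> \<X>"
    have "Vstar \<mu> f \<X> U x \<le> ennreal (W x)" by (rule Vstar_le[OF W_meas W_sol x])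
    then have "Vstar \<mu> f \<X> U x < \<infinity>" using le_less_trans[OF _ ennreal_less_top[of "W x"]] by simp
    moreover have "Kop \<mu> f \<X> (Vstar \<mu> f \<X> U) x + ennreal (U x) = Vstar \<mu> f \<X> U x"
      using Vstar_rec[OF x] by (simp add: add.commute)
    ultimately show "Vstar \<mu> f \<X> U x < \<infinity> \<and>
            Kop \<mu> f \<X> (Vstar \<mu> f \<X> U) x + ennreal (U x) = Vstar \<mu> f \<X> U x" by simp
  qed
  show ?thesis
  proof (intro conjI allI impI)
    show "\<forall>x\<in>\<X>. Vstar \<mu> f \<X> U x < \<infinity> \<and>
            Kop \<mu> f \<X> (Vstar \<mu> f \<X> U) x + ennreal (U x) = Vstar \<mu> f \<X> U x" by (rule part1)
  next
    fix V1 V2 :: "'a \<Rightarrow> real"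
    assume h: "V1 \<in> borel_measurable (restrict_space borel \<X>)
            \<and> V2 \<in> borel_measurable (restrict_space borel \<X>)
            \<and> (\<forall>x\<in>\<X>. V1 x \<ge> 0 \<and> V2 x \<ge> 0)
            \<and> (\<exists>B. \<forall>x\<in>\<X>. V1 x \<le> B) \<and> (\<exists>B. \<forall>x\<in>\<X>. V2 x \<le> B)
            \<and> (\<forall>x\<in>\<X>. Kop \<mu> f \<X> (\<lambda>y. ennreal (V1 y)) x + ennreal (U x) = ennreal (V1 x))
            \<and> (\<forall>x\<in>\<X>. Kop \<mu> f \<X> (\<lambda>y. ennreal (V2 y)) x + ennreal (U x) = ennreal (V2 x))"
    then obtain B1 B2 where b1: "\<forall>x\<in>\<X>. V1 x \<le> B1" and b2: "\<forall>x\<in>\<X>. V2 x \<le> B2" by blast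
    show "\<forall>x\<in>\<X>. V1 x = V2 x"
      using h by (intro uniq[OF W_meas W_sol cpos Uc _ _ _ b1 b2]) auto
  qed
qed

end
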